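(* Let $f,g:\mathbb{F}_2^N\to\mathbb{F}_2$. Then $$\langle f,g\rangle^8\le\mathbb{E}_{y,z\in\mathbb{F}_2^N}\langle f_{y,z},g_{y,z}\rangle^2.$$
   Context: $\langle f,g\rangle=\mathbb{E}_{x\in\mathbb{F}_2^N}(-1)^{f(x)+g(x)}$, $f_y(x)=f(x+y)-f(x)$, and $f_{y,z}=(f_y)_z$. *)

theory Defs
  imports Complex_Main
begin

text \<open>F_2 is modelled by bool (addition = xor, written as \<noteq>).
  F_2^N is modelled as the finite set of functions nat \<Rightarrow> bool supported in {..<N}.\<close>

definition cube :: "nat \<Rightarrow> (nat \<Rightarrow> bool) set" where
  "cube N = {x. \<forall>i\<ge>N. \<not> x i}"

definition vadd :: "(nat \<Rightarrow> bool) \<Rightarrow> (nat \<Rightarrow> bool) \<Rightarrow> (nat \<Rightarrow> bool)" where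
  "vadd x y = (\<lambda>i. x i \<noteq> y i)"

definition expect :: "nat \<Rightarrow> ((nat \<Rightarrow> bool) \<Rightarrow> real) \<Rightarrow> real" where
  "expect N h = (\<Sum>x\<in>cube N. h x) / real (card (cube N))"

text \<open>(-1)^(a+b) for a, b in F_2.\<close>
definition sgn2 :: "bool \<Rightarrow> bool \<Rightarrow> real" where
  "sgn2 a b = (if a = b then 1 else -1)"

definition ip :: "nat \<Rightarrow> ((nat \<Rightarrow> bool) \<Rightarrow> bool) \<Rightarrow> ((nat \<Rightarrow> bool) \<Rightarrow> bool) \<Rightarrow> real" where
  "ip N f g = expect N (\<lambda>x. sgn2 (f x) (g x))"

text \<open>f_y(x) = f(x+y) - f(x) (subtraction in F_2 is xor).\<close>
definition dlt :: "((nat \<Rightarrow> bool) \<Rightarrow> bool) \<Rightarrow> (nat \<Rightarrow> bool) \<Rightarrow> ((nat \<Rightarrow> bool) \<Rightarrow> bool)" where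
  "dlt f y = (\<lambda>x. f (vadd x y) \<noteq> f x)"

end

theory Submission
  imports Defs
begin

lemma finite_cube: "finite (cube N)"
proof -
  have "cube N \<subseteq> (\<lambda>S i. i \<in> S) ` Pow {..<N}"
  proof
    fix x assume "x \<in> cube N"
    hence "\<forall>i. N \<le> i \<longrightarrow> \<not> x i" by (simp add: cube_def)
    hence "x = (\<lambda>i. i \<in> {i. i < N \<and> x i})" by (metis (mono_tags, lifting) mem_Collect_eq not_le)
    thus "x \<in> (\<lambda>S i. i \<in> S) ` Pow {..<N}" by blast
  qed
  thus ?thesis by (rule finite_subset) auto
qed

lemma cube_ne: "cube N \<noteq> {}"
proof -
  have "(\<lambda>_. False) \<in> cube N" by (simp add: cube_def)
  thus ?thesis by blast
qed

lemma card_cube_pos: "card (cube N) > 0"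
  using finite_cube cube_ne by (simp add: card_gt_0_iff)

lemma vadd_cube: "x \<in> cube N \<Longrightarrow> y \<in> cube N \<Longrightarrow> vadd x y \<in> cube N"
  by (auto simp: cube_def vadd_def)

lemma vadd_comm: "vadd x y = vadd y x" by (auto simp: vadd_def fun_eq_iff)
lemma vadd_vadd: "vadd (vadd x a) a = x" by (auto simp: vadd_def fun_eq_iff)

lemma sum_transl:
  assumes "a \<in> cube N"
  shows "(\<Sum>x\<in>cube N. \<phi> (vadd x a)) = (\<Sum>x\<in>cube N. (\<phi> x :: real))"
proof -
  have "bij_betw (\<lambda>x. vadd x a) (cube N) (cube N)"
    by (rule bij_betw_byWitness[where f'="\<lambda>x. vadd x a"])
       (auto simp: vadd_vadd vadd_cube assms)
  thus ?thesis by (rule sum.reindex_bij_betw)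
qed

lemma expect_transl: "a \<in> cube N \<Longrightarrow> expect N (\<lambda>x. \<phi> (vadd x a)) = expect N \<phi>"
  unfolding expect_def by (simp add: sum_transl)

lemma expect_cong: "(\<And>x. x \<in> cube N \<Longrightarrow> \<phi> x = \<psi> x) \<Longrightarrow> expect N \<phi> = expect N \<psi>"
  unfolding expect_def by (metis (no_types, lifting) sum.cong)

lemma expect_cmult: "expect N (\<lambda>x. c * \<phi> x) = c * expect N \<phi>"
  unfolding expect_def by (simp add: sum_distrib_left)

lemma expect_swap: "expect N (\<lambda>y. expect N (\<lambda>x. F x y)) = expect N (\<lambda>x. expect N (\<lambda>y. F x y))"
  unfolding expect_def sum_divide_distrib[symmetric] by (subst sum.swap) (rule refl)

lemma expect_mono: "(\<And>x. x \<in> cube N \<Longrightarrow> \<phi> x \<le> \<psi> x) \<Longrightarrow> expect N \<phi> \<le> expect N \<psi>"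
  unfolding expect_def by (intro divide_right_mono sum_mono) auto

lemma jensen: "(expect N X)^2 \<le> expect N (\<lambda>x. (X x)^2)"
proof -
  let ?S = "cube N" let ?n = "real (card ?S)"
  define m where "m = expect N X"
  have n: "?n > 0" using card_cube_pos by simp
  have sX: "(\<Sum>x\<in>?S. X x) = ?n * m" using n by (simp add: m_def expect_def)
  have "0 \<le> (\<Sum>x\<in>?S. (X x - m)^2)" by (simp add: sum_nonneg)
  also have "\<dots> = (\<Sum>x\<in>?S. (X x)^2) - 2 * m * (\<Sum>x\<in>?S. X x) + ?n * m^2"
    by (simp add: power2_diff sum.distrib sum_subtractf sum_distrib_left ac_simps)
  finally have "?n * m^2 \<le> (\<Sum>x\<in>?S. (X x)^2)" using sX by (simp add: power2_eq_square algebra_simps)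
  hence "m^2 \<le> (\<Sum>x\<in>?S. (X x)^2) / ?n" using n by (simp add: pos_le_divide_eq mult.commute)
  thus ?thesis by (simp add: m_def expect_def)
qed

lemma sgn2_xor: "sgn2 (a \<noteq> b) (c \<noteq> d) = sgn2 a c * sgn2 b d"
  by (auto simp: sgn2_def)

lemma dd_sgn: "sgn2 (dlt (dlt f y) z x) (dlt (dlt g y) z x) = sgn2 (f (vadd (vadd x z) y)) (g (vadd (vadd x z) y)) * sgn2 (f (vadd x z)) (g (vadd x z)) * (sgn2 (f (vadd x y)) (g (vadd x y)) * sgn2 (f x) (g x))"
  unfolding dlt_def by (rule sgn2_xor[THEN trans], simp only: sgn2_xor)

lemma inner_lem:
  fixes h :: "(nat \<Rightarrow> bool) \<Rightarrow> real"
  assumes y: "y \<in> cube N"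
  shows "expect N (\<lambda>z. expect N (\<lambda>x. h (vadd (vadd x z) y) * h (vadd x z) * (h (vadd x y) * h x)))
    = (expect N (\<lambda>x. h (vadd x y) * h x))^2"
proof -
  define B where "B = expect N (\<lambda>x. h (vadd x y) * h x)"
  have "expect N (\<lambda>z. expect N (\<lambda>x. h (vadd (vadd x z) y) * h (vadd x z) * (h (vadd x y) * h x)))
     = expect N (\<lambda>x. expect N (\<lambda>z. h (vadd (vadd x z) y) * h (vadd x z) * (h (vadd x y) * h x)))"
    by (rule expect_swap)
  also have "\<dots> = expect N (\<lambda>x. (h (vadd x y) * h x) * B)"
  proof (rule expect_cong)
    fix x assume x: "x \<in> cube N"
    have "expect N (\<lambda>z. h (vadd (vadd x z) y) * h (vadd x z) * (h (vadd x y) * h x))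
        = expect N (\<lambda>z. (h (vadd x y) * h x) * (h (vadd (vadd z x) y) * h (vadd z x)))"
    proof (rule expect_cong)
      fix z show "h (vadd (vadd x z) y) * h (vadd x z) * (h (vadd x y) * h x)
        = (h (vadd x y) * h x) * (h (vadd (vadd z x) y) * h (vadd z x))"
        unfolding vadd_comm[of x z] by (rule mult.commute)
    qed
    also have "\<dots> = (h (vadd x y) * h x) * expect N (\<lambda>z. h (vadd (vadd z x) y) * h (vadd z x))"
      by (rule expect_cmult)
    also have "expect N (\<lambda>z. h (vadd (vadd z x) y) * h (vadd z x)) = B"
      unfolding B_def by (rule expect_transl[OF x, of "\<lambda>w. h (vadd w y) * h w"])
    finally show "expect N (\<lambda>z. h (vadd (vadd x z) y) * h (vadd x z) * (h (vadd x y) * h x))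
        = (h (vadd x y) * h x) * B" .
  qed
  also have "\<dots> = expect N (\<lambda>x. B * (h (vadd x y) * h x))"
    by (rule expect_cong) (rule mult.commute)
  also have "\<dots> = B * B" unfolding expect_cmult B_def ..
  finally show ?thesis unfolding B_def power2_eq_square .
qed

lemma EB_lem:
  fixes h :: "(nat \<Rightarrow> bool) \<Rightarrow> real"
  shows "expect N (\<lambda>y. expect N (\<lambda>x. h (vadd x y) * h x)) = (expect N h)^2"
proof -
  have "expect N (\<lambda>y. expect N (\<lambda>x. h (vadd x y) * h x)) = expect N (\<lambda>x. expect N (\<lambda>y. h (vadd x y) * h x))"
    by (rule expect_swap)
  also have "\<dots> = expect N (\<lambda>x. h x * expect N h)"
  proof (rule expect_cong)
    fix x assume x: "x \<in> cube N"
    have "expect N (\<lambda>y. h (vadd x y) * h x) = expect N (\<lambda>y. h x * h (vadd y x))"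
    proof (rule expect_cong)
      fix z show "h (vadd x z) * h x = h x * h (vadd z x)"
        unfolding vadd_comm[of x z] by (rule mult.commute)
    qed
    also have "\<dots> = h x * expect N (\<lambda>y. h (vadd y x))"
      by (rule expect_cmult)
    also have "expect N (\<lambda>y. h (vadd y x)) = expect N h"
      by (rule expect_transl[OF x])
    finally show "expect N (\<lambda>y. h (vadd x y) * h x) = h x * expect N h" .
  qed
  also have "\<dots> = expect N (\<lambda>x. expect N h * h x)"
    by (rule expect_cong) (rule mult.commute)
  also have "\<dots> = (expect N h)^2" unfolding expect_cmult power2_eq_square ..
  finally show ?thesis .
qed

theorem corollary4p2:
  fixes N :: nat and f g :: "(nat \<Rightarrow> bool) \<Rightarrow> bool"
  shows "(ip N f g) ^ 8 \<le>
    expect N (\<lambda>y. expect N (\<lambda>z. (ip N (dlt (dlt f y) z) (dlt (dlt g y) z)) ^ 2))"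
proof -
  define h where "h = (\<lambda>x. sgn2 (f x) (g x))"
  define A where "A y z = expect N (\<lambda>x. h (vadd (vadd x z) y) * h (vadd x z) * (h (vadd x y) * h x))" for y z
  define B where "B y = expect N (\<lambda>x. h (vadd x y) * h x)" for y
  have Aeq: "ip N (dlt (dlt f y) z) (dlt (dlt g y) z) = A y z" for y z
    unfolding ip_def A_def h_def by (rule expect_cong) (rule dd_sgn)
  have s0: "expect N (\<lambda>y. expect N (\<lambda>z. A y z)) = expect N (\<lambda>y. (B y)^2)"
    by (rule expect_cong) (unfold A_def B_def, rule inner_lem)
  have EB: "expect N B = (expect N h)^2" unfolding B_def by (rule EB_lem)
  have j: "(expect N B)^2 \<le> expect N (\<lambda>y. (B y)^2)" by (rule jensen)
  have p4: "(expect N h)^4 = (expect N B)^2" unfolding EB by (simp only: power_mult[symmetric]) simp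
  have s1: "(expect N h)^4 \<le> expect N (\<lambda>y. expect N (\<lambda>z. A y z))" unfolding s0 p4 by (rule j)
  have ih: "ip N f g = expect N h" unfolding ip_def h_def ..
  have "(ip N f g)^8 = ((expect N h)^4)^2" unfolding ih by (simp only: power_mult[symmetric]) simp
  also have "\<dots> \<le> (expect N (\<lambda>y. expect N (\<lambda>z. A y z)))^2"
    using s1 by (rule power_mono) (simp only: p4 zero_le_power2)
  also have "\<dots> \<le> expect N (\<lambda>y. (expect N (\<lambda>z. A y z))^2)" by (rule jensen)
  also have "\<dots> \<le> expect N (\<lambda>y. expect N (\<lambda>z. (A y z)^2))" by (intro expect_mono jensen)
  finally show ?thesis unfolding Aeq .
qed

end
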